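(* Let $G$ be a locally finite graph with a periodic proper vertex-coloring. Then $G$ has a periodic proper vertex-coloring with at most $\Delta(G)+1$ colors.
   Context: Locally finite: every vertex has finite degree. $\Delta(G)$ is the maximum degree of $G$. A vertex-coloring is periodic if the subgroup of automorphisms of $G$ mapping each vertex to a vertex of the same color has finitely many orbits on $V(G)$ (in particular a periodic coloring uses finitely many colors). *)

theory Defs
  imports Main "HOL-Library.Extended_Nat"
begin

definition graph :: "'a set \<Rightarrow> ('a \<Rightarrow> 'a \<Rightarrow> bool) \<Rightarrow> bool" where
  "graph V E \<longleftrightarrow> (\<forall>x y. E x y \<longrightarrow> x \<in> V \<and> y \<in> V) \<and>
                  (\<forall>x y. E x y \<longrightarrow> E y x) \<and> (\<forall>x. \<not> E x x)"

definition neighbours :: "('a \<Rightarrow> 'a \<Rightarrow> bool) \<Rightarrow> 'a \<Rightarrow> 'a set" where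
  "neighbours E v = {u. E v u}"

definition locally_finite :: "'a set \<Rightarrow> ('a \<Rightarrow> 'a \<Rightarrow> bool) \<Rightarrow> bool" where
  "locally_finite V E \<longleftrightarrow> (\<forall>v\<in>V. finite (neighbours E v))"

definition degree :: "('a \<Rightarrow> 'a \<Rightarrow> bool) \<Rightarrow> 'a \<Rightarrow> nat" where
  "degree E v = card (neighbours E v)"

definition max_degree :: "'a set \<Rightarrow> ('a \<Rightarrow> 'a \<Rightarrow> bool) \<Rightarrow> enat" where
  "max_degree V E = (SUP v\<in>V. enat (degree E v))"

definition automorphism :: "'a set \<Rightarrow> ('a \<Rightarrow> 'a \<Rightarrow> bool) \<Rightarrow> ('a \<Rightarrow> 'a) \<Rightarrow> bool" where
  "automorphism V E f \<longleftrightarrow> bij_betw f V V \<and> (\<forall>x\<in>V. \<forall>y\<in>V. E x y \<longleftrightarrow> E (f x) (f y))"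

definition proper_coloring :: "'a set \<Rightarrow> ('a \<Rightarrow> 'a \<Rightarrow> bool) \<Rightarrow> ('a \<Rightarrow> 'c) \<Rightarrow> bool" where
  "proper_coloring V E c \<longleftrightarrow> (\<forall>x\<in>V. \<forall>y\<in>V. E x y \<longrightarrow> c x \<noteq> c y)"

definition color_orbit :: "'a set \<Rightarrow> ('a \<Rightarrow> 'a \<Rightarrow> bool) \<Rightarrow> ('a \<Rightarrow> 'c) \<Rightarrow> 'a \<Rightarrow> 'a set" where
  "color_orbit V E c v =
     {f v | f. automorphism V E f \<and> (\<forall>x\<in>V. c (f x) = c x)}"

definition periodic_coloring :: "'a set \<Rightarrow> ('a \<Rightarrow> 'a \<Rightarrow> bool) \<Rightarrow> ('a \<Rightarrow> 'c) \<Rightarrow> bool" where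
  "periodic_coloring V E c \<longleftrightarrow> finite (color_orbit V E c ` V)"

end

theory Submission
  imports Defs
begin

lemma aut_comp:
  assumes "automorphism V E f" "automorphism V E g"
  shows "automorphism V E (g \<circ> f)"
proof -
  have fV: "\<And>x. x \<in> V \<Longrightarrow> f x \<in> V" using assms(1) unfolding automorphism_def bij_betw_def by auto
  have b: "bij_betw (g \<circ> f) V V" using assms unfolding automorphism_def
    using bij_betw_trans by blast
  have e: "\<forall>x\<in>V. \<forall>y\<in>V. E x y \<longleftrightarrow> E ((g \<circ> f) x) ((g \<circ> f) y)"
  proof (intro ballI)
    fix x y assume xy: "x \<in> V" "y \<in> V"
    have "E x y \<longleftrightarrow> E (f x) (f y)" using assms(1) xy unfolding automorphism_def by blast
    also have "\<dots> \<longleftrightarrow> E (g (f x)) (g (f y))" using assms(2) fV xy unfolding automorphism_def by blast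
    finally show "E x y \<longleftrightarrow> E ((g \<circ> f) x) ((g \<circ> f) y)" by simp
  qed
  show ?thesis unfolding automorphism_def using b e by blast
qed

lemma aut_id: "automorphism V E id"
  unfolding automorphism_def by auto

lemma orbit_mem: "v \<in> color_orbit V E d v"
  unfolding color_orbit_def by (intro CollectI exI[of _ id] conjI) (simp_all add: aut_id)

lemma orbit_shift:
  assumes "automorphism V E f" "\<forall>x\<in>V. d (f x) = d x" "v \<in> V"
  shows "color_orbit V E d (f v) \<subseteq> color_orbit V E d v"
proof
  fix x assume "x \<in> color_orbit V E d (f v)"
  then obtain g where g: "automorphism V E g" "\<forall>x\<in>V. d (g x) = d x" "x = g (f v)"
    unfolding color_orbit_def by auto
  have fV: "\<And>x. x \<in> V \<Longrightarrow> f x \<in> V" using assms(1) unfolding automorphism_def bij_betw_def by auto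
  have "automorphism V E (g \<circ> f)" using aut_comp assms(1) g(1) by blast
  moreover have "\<forall>x\<in>V. d ((g \<circ> f) x) = d x" using g(2) assms(2) fV by auto
  moreover have "x = (g \<circ> f) v" using g(3) by simp
  ultimately show "x \<in> color_orbit V E d v" unfolding color_orbit_def by blast
qed

lemma periodic_transfer:
  assumes per: "periodic_coloring V E c"
    and inv: "\<And>f. automorphism V E f \<Longrightarrow> \<forall>x\<in>V. c (f x) = c x \<Longrightarrow> \<forall>x\<in>V. d (f x) = d x"
  shows "periodic_coloring V E d"
proof -
  let ?oc = "color_orbit V E c" and ?od = "color_orbit V E d"
  have sub: "?od ` V \<subseteq> (\<lambda>S. ?od (SOME v. v \<in> V \<and> ?oc v = S)) ` (?oc ` V)"
  proof
    fix T assume "T \<in> ?od ` V"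
    then obtain v where v: "v \<in> V" "T = ?od v" by auto
    define v' where "v' = (SOME w. w \<in> V \<and> ?oc w = ?oc v)"
    have v': "v' \<in> V" "?oc v' = ?oc v" unfolding v'_def using someI[of "\<lambda>w. w \<in> V \<and> ?oc w = ?oc v" v] v by auto
    have a: "?od v \<subseteq> ?od v'"
    proof -
      have "v \<in> ?oc v'" unfolding v'(2) by (rule orbit_mem)
      then obtain f where f: "automorphism V E f" "\<forall>x\<in>V. c (f x) = c x" "v = f v'"
        unfolding color_orbit_def by auto
      show ?thesis using orbit_shift[OF f(1) inv[OF f(1) f(2)] v'(1)] f(3) by simp
    qed
    have b: "?od v' \<subseteq> ?od v"
    proof -
      have "v' \<in> ?oc v" unfolding v'(2)[symmetric] by (rule orbit_mem)
      then obtain f where f: "automorphism V E f" "\<forall>x\<in>V. c (f x) = c x" "v' = f v"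
        unfolding color_orbit_def by auto
      show ?thesis using orbit_shift[OF f(1) inv[OF f(1) f(2)] v(1)] f(3) by simp
    qed
    show "T \<in> (\<lambda>S. ?od (SOME v. v \<in> V \<and> ?oc v = S)) ` (?oc ` V)"
    proof (rule image_eqI[where x="?oc v"])
      show "T = ?od (SOME w. w \<in> V \<and> ?oc w = ?oc v)" unfolding v'_def[symmetric] v(2) using a b by (rule equalityI)
      show "?oc v \<in> ?oc ` V" using v(1) by (rule imageI)
    qed
  qed
  have "finite (?oc ` V)" using per unfolding periodic_coloring_def .
  then have "finite ((\<lambda>S. ?od (SOME v. v \<in> V \<and> ?oc v = S)) ` (?oc ` V))" by (rule finite_imageI)
  then show ?thesis unfolding periodic_coloring_def using sub by (rule finite_subset[rotated])
qed

lemma periodic_finite_colors: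
  assumes "periodic_coloring V E c"
  shows "finite (c ` V)"
proof -
  have "c ` V \<subseteq> (\<lambda>S. c (SOME x. x \<in> S)) ` (color_orbit V E c ` V)"
  proof
    fix y assume "y \<in> c ` V"
    then obtain v where v: "v \<in> V" "y = c v" by auto
    have m: "(SOME x. x \<in> color_orbit V E c v) \<in> color_orbit V E c v"
      by (rule someI[of _ v], rule orbit_mem)
    then obtain f where "automorphism V E f" "\<forall>x\<in>V. c (f x) = c x"
      "(SOME x. x \<in> color_orbit V E c v) = f v"
      unfolding color_orbit_def by auto
    then have "c (SOME x. x \<in> color_orbit V E c v) = c v" using v by simp
    then have "y = (\<lambda>S. c (SOME x. x \<in> S)) (color_orbit V E c v)" using v by simp
    moreover have "color_orbit V E c v \<in> color_orbit V E c ` V" using v(1) by (rule imageI)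
    ultimately show "y \<in> (\<lambda>S. c (SOME x. x \<in> S)) ` (color_orbit V E c ` V)" by (rule image_eqI)
  qed
  moreover have "finite (color_orbit V E c ` V)" using assms unfolding periodic_coloring_def .
  ultimately show ?thesis by (meson finite_subset finite_imageI)
qed

lemma least_notin_le:
  fixes S :: "nat set"
  assumes "finite S"
  shows "(LEAST j. j \<notin> S) \<le> card S" and "(LEAST j. j \<notin> S) \<notin> S"
proof -
  have "\<exists>j\<le>card S. j \<notin> S"
  proof (rule ccontr)
    assume "\<not> ?thesis"
    then have "{0..card S} \<subseteq> S" by auto
    then have "card {0..card S} \<le> card S" using assms card_mono by blast
    then show False by simp
  qed
  then obtain j where j: "j \<le> card S" "j \<notin> S" by auto
  show "(LEAST j. j \<notin> S) \<le> card S" using j Least_le[of "\<lambda>j. j \<notin> S" j] by linarith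
  show "(LEAST j. j \<notin> S) \<notin> S" using j LeastI[of "\<lambda>j. j \<notin> S" j] by blast
qed

primrec gcol :: "('a \<Rightarrow> 'a \<Rightarrow> bool) \<Rightarrow> ('a \<Rightarrow> nat) \<Rightarrow> nat \<Rightarrow> 'a \<Rightarrow> nat" where
  "gcol E c0 0 = (\<lambda>v. 0)"
| "gcol E c0 (Suc n) = (\<lambda>v. if c0 v = n then (LEAST j. j \<notin> gcol E c0 n ` {u. E v u \<and> c0 u < n})
     else gcol E c0 n v)"

lemma gcol_Suc_app: "gcol E c0 (Suc n) v = (if c0 v = n then (LEAST j. j \<notin> gcol E c0 n ` {u. E v u \<and> c0 u < n})
     else gcol E c0 n v)"
  by (simp only: gcol.simps)

lemma gcol_stable: "c0 u < n \<Longrightarrow> gcol E c0 n u = gcol E c0 (Suc (c0 u)) u"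
proof (induction n)
  case 0 then show ?case by simp
next
  case (Suc n)
  show ?case
  proof (cases "c0 u = n")
    case True then show ?thesis by (simp only:)
  next
    case False then have "c0 u < n" using Suc.prems by simp
    have "gcol E c0 (Suc n) u = gcol E c0 n u" using False by (simp only: gcol_Suc_app if_False)
    also have "\<dots> = gcol E c0 (Suc (c0 u)) u" by (rule Suc.IH[OF \<open>c0 u < n\<close>])
    finally show ?thesis .
  qed
qed

lemma gcol_eq:
  "gcol E c0 (Suc (c0 v)) v = (LEAST j. j \<notin> (\<lambda>u. gcol E c0 (Suc (c0 u)) u) ` {u. E v u \<and> c0 u < c0 v})"
proof -
  have "gcol E c0 (c0 v) ` {u. E v u \<and> c0 u < c0 v} = (\<lambda>u. gcol E c0 (Suc (c0 u)) u) ` {u. E v u \<and> c0 u < c0 v}"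
  proof (rule image_cong[OF refl])
    fix u assume "u \<in> {u. E v u \<and> c0 u < c0 v}"
    then have "c0 u < c0 v" by blast
    then show "gcol E c0 (c0 v) u = gcol E c0 (Suc (c0 u)) u" by (rule gcol_stable)
  qed
  moreover have "gcol E c0 (Suc (c0 v)) v = (LEAST j. j \<notin> gcol E c0 (c0 v) ` {u. E v u \<and> c0 u < c0 v})"
    by (subst gcol_Suc_app) (rule if_P[OF refl])
  ultimately show ?thesis by (simp only:)
qed

theorem lemma2p7:
  fixes V :: "'a set" and E :: "'a \<Rightarrow> 'a \<Rightarrow> bool" and c :: "'a \<Rightarrow> 'c"
  assumes "graph V E"
    and "locally_finite V E"
    and "proper_coloring V E c"
    and "periodic_coloring V E c"
  shows "\<exists>d :: 'a \<Rightarrow> nat. proper_coloring V E d \<and> periodic_coloring V E d \<and>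
           enat (card (d ` V)) \<le> max_degree V E + 1"
proof -
  have gr: "\<And>x y. E x y \<Longrightarrow> x \<in> V \<and> y \<in> V" "\<And>x y. E x y \<Longrightarrow> E y x"
    using assms(1) unfolding graph_def by blast+
  have fin: "finite (c ` V)" using periodic_finite_colors[OF assms(4)] .
  obtain e :: "'c \<Rightarrow> nat" where e: "inj_on e (c ` V)"
    using finite_imp_inj_to_nat_seg[OF fin] by blast
  define c0 where "c0 = e \<circ> c"
  have c0p: "\<And>u v. u \<in> V \<Longrightarrow> v \<in> V \<Longrightarrow> E u v \<Longrightarrow> c0 u \<noteq> c0 v"
  proof -
    fix u v assume uv: "u \<in> V" "v \<in> V" "E u v"
    have "c u \<noteq> c v" using assms(3) uv unfolding proper_coloring_def by blast
    moreover have "c u \<in> c ` V" "c v \<in> c ` V" using uv by auto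
    ultimately show "c0 u \<noteq> c0 v" unfolding c0_def comp_def using inj_on_eq_iff[OF e] by blast
  qed
  define d where "d = (\<lambda>v. gcol E c0 (Suc (c0 v)) v)"
  define N where "N = (\<lambda>v. {u. E v u \<and> c0 u < c0 v})"
  have deq: "\<And>v. d v = (LEAST j. j \<notin> d ` N v)"
    unfolding d_def N_def by (rule gcol_eq)
  have Nsub: "\<And>v. N v \<subseteq> neighbours E v" unfolding N_def neighbours_def by auto
  have Nfin: "\<And>v. v \<in> V \<Longrightarrow> finite (N v)"
  proof -
    fix v assume v: "v \<in> V"
    have "finite (neighbours E v)" using assms(2) v unfolding locally_finite_def by blast
    then show "finite (N v)" by (rule finite_subset[OF Nsub])
  qed
  have dnot: "\<And>v. v \<in> V \<Longrightarrow> d v \<notin> d ` N v"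
  proof -
    fix v assume v: "v \<in> V"
    have "finite (d ` N v)" using Nfin[OF v] by simp
    from least_notin_le(2)[OF this] show "d v \<notin> d ` N v" unfolding deq[of v] .
  qed
  have dle: "\<And>v. v \<in> V \<Longrightarrow> d v \<le> degree E v"
  proof -
    fix v assume v: "v \<in> V"
    have "finite (d ` N v)" using Nfin[OF v] by simp
    from least_notin_le(1)[OF this] have "d v \<le> card (d ` N v)" unfolding deq[of v] .
    also have "\<dots> \<le> card (N v)" using Nfin[OF v] card_image_le by blast
    also have "\<dots> \<le> degree E v" unfolding degree_def
      using Nsub assms(2) v unfolding locally_finite_def by (simp add: card_mono)
    finally show "d v \<le> degree E v" .
  qed
  have proper: "proper_coloring V E d"
    unfolding proper_coloring_def
  proof (intro ballI impI)
    fix u v assume uv: "u \<in> V" "v \<in> V" "E u v"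
    have ne: "c0 u \<noteq> c0 v" using c0p uv by blast
    show "d u \<noteq> d v"
    proof (cases "c0 u < c0 v")
      case True
      then have "u \<in> N v" unfolding N_def using gr(2) uv(3) by auto
      then show ?thesis using dnot[OF uv(2)] by (metis imageI)
    next
      case False
      then have "v \<in> N u" unfolding N_def using uv(3) ne by auto
      then show ?thesis using dnot[OF uv(1)] by (metis imageI)
    qed
  qed
  have inv: "\<forall>x\<in>V. d (f x) = d x" if f: "automorphism V E f" "\<forall>x\<in>V. c (f x) = c x" for f
  proof -
    have fV: "\<And>x. x \<in> V \<Longrightarrow> f x \<in> V" and fsurj: "f ` V = V"
      using f(1) unfolding automorphism_def bij_betw_def by auto
    have fE: "\<And>x y. x \<in> V \<Longrightarrow> y \<in> V \<Longrightarrow> E x y \<longleftrightarrow> E (f x) (f y)"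
      using f(1) unfolding automorphism_def by auto
    have fc0: "\<And>x. x \<in> V \<Longrightarrow> c0 (f x) = c0 x" using f(2) unfolding c0_def by simp
    have "\<forall>v. v \<in> V \<longrightarrow> c0 v = n \<longrightarrow> d (f v) = d v" for n
    proof (induction n rule: less_induct)
      case (less n)
      show ?case
      proof (intro allI impI)
        fix v assume v: "v \<in> V" "c0 v = n"
        have NF: "N (f v) = f ` N v"
        proof
          show "N (f v) \<subseteq> f ` N v"
          proof
            fix u assume u: "u \<in> N (f v)"
            then have uV: "u \<in> V" using gr unfolding N_def by auto
            then obtain w where w: "w \<in> V" "u = f w" using fsurj by (metis imageE)
            have "E v w" using u w fE[OF v(1) w(1)] unfolding N_def by auto
            moreover have "c0 w < c0 v" using u w fc0 v unfolding N_def by auto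
            ultimately show "u \<in> f ` N v" unfolding N_def using w by auto
          qed
        next
          show "f ` N v \<subseteq> N (f v)"
          proof
            fix u assume "u \<in> f ` N v"
            then obtain w where w: "w \<in> N v" "u = f w" by auto
            have wV: "w \<in> V" using w gr unfolding N_def by auto
            show "u \<in> N (f v)" using w wV fE[OF v(1) wV] fc0 v(1) unfolding N_def by auto
          qed
        qed
        have "d ` f ` N v = d ` N v"
        proof (rule image_cong[OF refl, THEN trans[OF image_image]])
          fix w assume w: "w \<in> N v"
          have wV: "w \<in> V" using w gr unfolding N_def by auto
          have "c0 w < n" using w v unfolding N_def by auto
          then show "d (f w) = d w" using less.IH wV by blast
        qed
        then have "(LEAST j. j \<notin> d ` N (f v)) = (LEAST j. j \<notin> d ` N v)" using NF by simp
        then show "d (f v) = d v" unfolding deq[of "f v"] deq[of v] .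
      qed
    qed
    then show ?thesis by blast
  qed
  have per: "periodic_coloring V E d"
    using periodic_transfer[OF assms(4)] inv by blast
  have bound: "enat (card (d ` V)) \<le> max_degree V E + 1"
  proof (cases "max_degree V E")
    case (enat m)
    have "\<And>v. v \<in> V \<Longrightarrow> d v \<le> m"
    proof -
      fix v assume v: "v \<in> V"
      have "enat (degree E v) \<le> max_degree V E" unfolding max_degree_def using v by (rule SUP_upper)
      then show "d v \<le> m" using dle[OF v] enat by simp
    qed
    then have "d ` V \<subseteq> {0..m}" by auto
    then have "card (d ` V) \<le> card {0..m}" by (intro card_mono) auto
    then have "card (d ` V) \<le> m + 1" by simp
    then show ?thesis using enat by (simp add: one_enat_def)
  next
    case infinity then show ?thesis by simp
  qed
  show ?thesis by (rule exI[of _ d]) (intro conjI proper per bound)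
qed

end
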